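(* Let $F$ be a field and let $I\subseteq F_{\mathbb{Z}_2^2}\{X\}$ be the graded $T$-ideal generated by \begin{align*} (ab)v=v(ba), &\quad g(v)\ne 0,\ g(a)=g(b)\ne 0;\\ ((ax)b)v=v((ba)x), &\quad g(v)\ne 0,\ g(x)=0,\ g(a)=g(b)\ne 0;\\ v((ax)b)=((ba)x)v, &\quad g(v)\ne 0,\ g(x)=0,\ g(a)=g(b)\ne 0;\\ x\circ y=0, &\quad \langle g(x),g(y)\rangle=\mathbb{Z}_2^2;\\ (vb)a=v(ab), &\quad g(v)\notin\langle g(a),g(b)\rangle;\\ a(vb)=v(ba), &\quad \langle g(v),g(b)\rangle=\mathbb{Z}_2^2,\ g(a)=0;\\ (va)w+(wa)v=-(v\circ w)a, &\quad g(a)\ne 0,\ g(v),g(w)\notin\langle g(a)\rangle;\\ (va)(wb)+(wa)(vb)=-(v\circ w)(ba), &\quad g(a)\neq 0,\ g(v),g(w)\notin\langle g(a),g(b)\rangle;\\ (x,y,z)=0, &\quad |\langle g(x),g(y),g(z)\rangle|\le 2;\\ [x,y]=0, &\quad g(x)=g(y)=0, \end{align*} and write $p\equiv q$ for $p-q\in I$. Let $U$ be the subalgebra of $F_{\mathbb{Z}_2^2}\{X\}$ generated by all variables of nonzero degree, and let ${}^*:U\to U$ be the linear map defined on monomials by $x^*=-x$ for each variable $x$ (of nonzero degree) and $(vw)^*=w^*v^*$. Let $f\in U$ and let $x$ be a variable of nonzero degree. Then: (1) ${}^*$ is an involution of $U$ (an anti-automorphism of order $2$); (2) if $f_0=0$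 then $f^*\equiv -f$; (3) if $f=v\cdot w$ with $v,w\in U$ homogeneous and $g(v)=g(w)\neq0$, then $f^*\equiv w\cdot v$; (4) if $f_{g(x)}=0$ then $fx\equiv xf^*$; (5) under any graded evaluation of the variables in the $\mathbb{Z}_2^2$-graded octonion algebra $\mathbb{O}=\mathbf{C}(\mu,\beta,\gamma)$, the value of $f^*$ is the conjugate $\overline{f}$ of the value of $f$.
   Context: $\mathbb{Z}_2^2$ is written additively. $F_G\{X\}$: free nonassociative algebra on variables $x_i^a$ ($a\in G$), graded by $g(x_i^a)=a$, $g(uv)=g(u)g(v)$; for $f$ and $h\in G$, $f_h$ denotes the homogeneous component of $f$ of degree $h$. A graded $T$-ideal is an ideal invariant under all graded endomorphisms (variables sent to elements of the same degree). $[x,y]=xy-yx$, $x\circ y=xy+yx$, $(x,y,z)=(xy)z-x(yz)$. Octonions: Cayley–Dickson process $(A,\alpha)=A\oplus A$, $(a_1,a_2)(a_3,a_4)=(a_1a_3+\alpha a_4\bar a_2,\bar a_1a_4+a_3a_2)$, $\overline{(a_1,a_2)}=(\bar a_1,-a_2)$, graded $(A,\alpha)_{(h,0)}=A_h\oplus0$, $(A,\alpha)_{(h,1)}=0\oplus A_h$; $\mathbf{K}(\mu)=F\oplus Fv_1$ with $(a+bv_1)(c+dv_1)=ac+\mu bd+(ad+bc+bd)v_1$, $\overline{a+bv_1}=(a+b)-bv_1$, $4\mu+1\ne0$, trivially graded; $\mathbf{C}(\mu,\beta,\gamma)=((\mathbf{K}(\mu),\beta),\gamma)$, $\beta,\gamma\ne0$.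 A graded evaluation substitutes each variable by an element of $\mathbb{O}$ of the same degree. *)

theory Defs
  imports Main "HOL-Library.Poly_Mapping" "HOL-Library.Z2" "HOL-Library.Product_Plus"
begin

type_synonym grp = "bit \<times> bit"

inductive_set sgen :: "grp set \<Rightarrow> grp set" for S :: "grp set" where
  sgen_zero: "0 \<in> sgen S"
| sgen_base: "a \<in> S \<Longrightarrow> a \<in> sgen S"
| sgen_add: "a \<in> sgen S \<Longrightarrow> b \<in> sgen S \<Longrightarrow> a + b \<in> sgen S"

text \<open>Variables x_i^a: index i and degree a.\<close>
type_synonym var = "nat \<times> grp"

definition vdeg :: "var \<Rightarrow> grp" where "vdeg x = snd x"

datatype fmon = MVar var | MMul fmon fmon

fun mdeg :: "fmon \<Rightarrow> grp" where
  "mdeg (MVar x) = vdeg x"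
| "mdeg (MMul u v) = mdeg u + mdeg v"

type_synonym 'a fpoly = "fmon \<Rightarrow>\<^sub>0 'a"

definition pscale :: "'a::field \<Rightarrow> 'a fpoly \<Rightarrow> 'a fpoly" where
  "pscale c p = Poly_Mapping.map (\<lambda>y. c * y) p"

definition pmul :: "'a::field fpoly \<Rightarrow> 'a fpoly \<Rightarrow> 'a fpoly" where
  "pmul p q = (\<Sum>m\<in>Poly_Mapping.keys p. \<Sum>n\<in>Poly_Mapping.keys q.
       Poly_Mapping.single (MMul m n) (Poly_Mapping.lookup p m * Poly_Mapping.lookup q n))"

definition pvar :: "var \<Rightarrow> 'a::field fpoly" where
  "pvar x = Poly_Mapping.single (MVar x) 1"

definition hcomp :: "grp \<Rightarrow> 'a::field fpoly \<Rightarrow> 'a fpoly" where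
  "hcomp h f = (\<Sum>m\<in>Poly_Mapping.keys f. if mdeg m = h then Poly_Mapping.single m (Poly_Mapping.lookup f m) else 0)"

definition homogeneous :: "grp \<Rightarrow> 'a::field fpoly \<Rightarrow> bool" where
  "homogeneous h f \<longleftrightarrow> hcomp h f = f"

definition comm :: "'a::field fpoly \<Rightarrow> 'a fpoly \<Rightarrow> 'a fpoly" where
  "comm x y = pmul x y - pmul y x"

definition jordan :: "'a::field fpoly \<Rightarrow> 'a fpoly \<Rightarrow> 'a fpoly" where
  "jordan x y = pmul x y + pmul y x"

definition assoc :: "'a::field fpoly \<Rightarrow> 'a fpoly \<Rightarrow> 'a fpoly \<Rightarrow> 'a fpoly" where
  "assoc x y z = pmul (pmul x y) z - pmul x (pmul y z)"

fun msubst :: "(var \<Rightarrow> 'a::field fpoly) \<Rightarrow> fmon \<Rightarrow> 'a fpoly" where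
  "msubst \<sigma> (MVar x) = \<sigma> x"
| "msubst \<sigma> (MMul u v) = pmul (msubst \<sigma> u) (msubst \<sigma> v)"

definition psubst :: "(var \<Rightarrow> 'a::field fpoly) \<Rightarrow> 'a fpoly \<Rightarrow> 'a fpoly" where
  "psubst \<sigma> p = (\<Sum>m\<in>Poly_Mapping.keys p. pscale (Poly_Mapping.lookup p m) (msubst \<sigma> m))"

definition graded_subst :: "(var \<Rightarrow> 'a::field fpoly) \<Rightarrow> bool" where
  "graded_subst \<sigma> \<longleftrightarrow> (\<forall>x. homogeneous (vdeg x) (\<sigma> x))"

definition is_ideal :: "'a::field fpoly set \<Rightarrow> bool" where
  "is_ideal J \<longleftrightarrow> 0 \<in> J \<and> (\<forall>p\<in>J. \<forall>q\<in>J. p + q \<in> J) \<and> (\<forall>c. \<forall>p\<in>J. pscale c p \<in> J)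
     \<and> (\<forall>p\<in>J. \<forall>q. pmul p q \<in> J \<and> pmul q p \<in> J)"

definition graded_T_ideal :: "'a::field fpoly set \<Rightarrow> bool" where
  "graded_T_ideal J \<longleftrightarrow> is_ideal J \<and> (\<forall>\<sigma>. graded_subst \<sigma> \<longrightarrow> (\<forall>p\<in>J. psubst \<sigma> p \<in> J))"

definition TI_gen :: "'a::field fpoly set \<Rightarrow> 'a fpoly set" where
  "TI_gen S = \<Inter>{J. graded_T_ideal J \<and> S \<subseteq> J}"

definition gens :: "'a::field fpoly set" where
  "gens =
    {pmul (pmul (pvar a) (pvar b)) (pvar v) - pmul (pvar v) (pmul (pvar b) (pvar a)) | a b v.
        vdeg v \<noteq> 0 \<and> vdeg a = vdeg b \<and> vdeg a \<noteq> 0}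
  \<union> {pmul (pmul (pmul (pvar a) (pvar x)) (pvar b)) (pvar v)
       - pmul (pvar v) (pmul (pmul (pvar b) (pvar a)) (pvar x)) | a b v x.
        vdeg v \<noteq> 0 \<and> vdeg x = 0 \<and> vdeg a = vdeg b \<and> vdeg a \<noteq> 0}
  \<union> {pmul (pvar v) (pmul (pmul (pvar a) (pvar x)) (pvar b))
       - pmul (pmul (pmul (pvar b) (pvar a)) (pvar x)) (pvar v) | a b v x.
        vdeg v \<noteq> 0 \<and> vdeg x = 0 \<and> vdeg a = vdeg b \<and> vdeg a \<noteq> 0}
  \<union> {jordan (pvar x) (pvar y) | x y. sgen {vdeg x, vdeg y} = UNIV}
  \<union> {pmul (pmul (pvar v) (pvar b)) (pvar a) - pmul (pvar v) (pmul (pvar a) (pvar b)) | a b v.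
        vdeg v \<notin> sgen {vdeg a, vdeg b}}
  \<union> {pmul (pvar a) (pmul (pvar v) (pvar b)) - pmul (pvar v) (pmul (pvar b) (pvar a)) | a b v.
        sgen {vdeg v, vdeg b} = UNIV \<and> vdeg a = 0}
  \<union> {pmul (pmul (pvar v) (pvar a)) (pvar w) + pmul (pmul (pvar w) (pvar a)) (pvar v)
       + pmul (jordan (pvar v) (pvar w)) (pvar a) | a v w.
        vdeg a \<noteq> 0 \<and> vdeg v \<notin> sgen {vdeg a} \<and> vdeg w \<notin> sgen {vdeg a}}
  \<union> {pmul (pmul (pvar v) (pvar a)) (pmul (pvar w) (pvar b))
       + pmul (pmul (pvar w) (pvar a)) (pmul (pvar v) (pvar b))
       + pmul (jordan (pvar v) (pvar w)) (pmul (pvar b) (pvar a)) | a b v w.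
        vdeg a \<noteq> 0 \<and> vdeg v \<notin> sgen {vdeg a, vdeg b} \<and> vdeg w \<notin> sgen {vdeg a, vdeg b}}
  \<union> {assoc (pvar x) (pvar y) (pvar z) | x y z. card (sgen {vdeg x, vdeg y, vdeg z}) \<le> 2}
  \<union> {comm (pvar x) (pvar y) | x y. vdeg x = 0 \<and> vdeg y = 0}"

definition Iid :: "'a::field fpoly set" where
  "Iid = TI_gen gens"

definition is_subalgebra :: "'a::field fpoly set \<Rightarrow> bool" where
  "is_subalgebra A \<longleftrightarrow> 0 \<in> A \<and> (\<forall>p\<in>A. \<forall>q\<in>A. p + q \<in> A) \<and> (\<forall>c. \<forall>p\<in>A. pscale c p \<in> A)
     \<and> (\<forall>p\<in>A. \<forall>q\<in>A. pmul p q \<in> A)"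

definition Usub :: "'a::field fpoly set" where
  "Usub = \<Inter>{A. is_subalgebra A \<and> {pvar x | x. vdeg x \<noteq> 0} \<subseteq> A}"

fun mstar :: "fmon \<Rightarrow> 'a::field fpoly" where
  "mstar (MVar x) = - pvar x"
| "mstar (MMul v w) = pmul (mstar w) (mstar v)"

definition star :: "'a::field fpoly \<Rightarrow> 'a fpoly" where
  "star f = (\<Sum>m\<in>Poly_Mapping.keys f. pscale (Poly_Mapping.lookup f m) (mstar m))"

type_synonym 'a kalg = "'a \<times> 'a"
type_synonym 'a qalg = "'a kalg \<times> 'a kalg"
type_synonym 'a oalg = "'a qalg \<times> 'a qalg"

fun kmul :: "'a::field \<Rightarrow> 'a kalg \<Rightarrow> 'a kalg \<Rightarrow> 'a kalg" where
  "kmul \<mu> (a, b) (c, d) = (a * c + \<mu> * b * d, a * d + b * c + b * d)"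

fun kconj :: "'a::field kalg \<Rightarrow> 'a kalg" where
  "kconj (a, b) = (a + b, - b)"

fun kscale :: "'a::field \<Rightarrow> 'a kalg \<Rightarrow> 'a kalg" where
  "kscale c (a, b) = (c * a, c * b)"

fun qmul :: "'a::field \<Rightarrow> 'a \<Rightarrow> 'a qalg \<Rightarrow> 'a qalg \<Rightarrow> 'a qalg" where
  "qmul \<mu> \<beta> (a1, a2) (a3, a4) =
     (kmul \<mu> a1 a3 + kscale \<beta> (kmul \<mu> a4 (kconj a2)), kmul \<mu> (kconj a1) a4 + kmul \<mu> a3 a2)"

fun qconj :: "'a::field qalg \<Rightarrow> 'a qalg" where
  "qconj (a1, a2) = (kconj a1, - a2)"

fun qscale :: "'a::field \<Rightarrow> 'a qalg \<Rightarrow> 'a qalg" where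
  "qscale c (a1, a2) = (kscale c a1, kscale c a2)"

fun omul :: "'a::field \<Rightarrow> 'a \<Rightarrow> 'a \<Rightarrow> 'a oalg \<Rightarrow> 'a oalg \<Rightarrow> 'a oalg" where
  "omul \<mu> \<beta> \<gamma> (a1, a2) (a3, a4) =
     (qmul \<mu> \<beta> a1 a3 + qscale \<gamma> (qmul \<mu> \<beta> a4 (qconj a2)),
      qmul \<mu> \<beta> (qconj a1) a4 + qmul \<mu> \<beta> a3 a2)"

fun oconj :: "'a::field oalg \<Rightarrow> 'a oalg" where
  "oconj (a1, a2) = (qconj a1, - a2)"

fun oscale :: "'a::field \<Rightarrow> 'a oalg \<Rightarrow> 'a oalg" where
  "oscale c (a1, a2) = (qscale c a1, qscale c a2)"

text \<open>Grading: K trivially graded; Q = (K,beta) graded by Z_2 with Q_0 = K+0, Q_1 = 0+K;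
  O = (Q,gamma) graded by Z_2^2 with O_(h,0) = Q_h + 0 and O_(h,1) = 0 + Q_h.\<close>
definition qhom :: "bit \<Rightarrow> 'a::field qalg set" where
  "qhom h = (if h = 0 then {(a, 0) | a. True} else {(0, a) | a. True})"

definition ohom :: "grp \<Rightarrow> 'a::field oalg set" where
  "ohom g = (if snd g = 0 then {(q, 0) | q. q \<in> qhom (fst g)} else {(0, q) | q. q \<in> qhom (fst g)})"

fun meval :: "'a::field \<Rightarrow> 'a \<Rightarrow> 'a \<Rightarrow> (var \<Rightarrow> 'a oalg) \<Rightarrow> fmon \<Rightarrow> 'a oalg" where
  "meval \<mu> \<beta> \<gamma> \<phi> (MVar x) = \<phi> x"
| "meval \<mu> \<beta> \<gamma> \<phi> (MMul u v) = omul \<mu> \<beta> \<gamma> (meval \<mu> \<beta> \<gamma> \<phi> u) (meval \<mu> \<beta> \<gamma> \<phi> v)"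

definition peval :: "'a::field \<Rightarrow> 'a \<Rightarrow> 'a \<Rightarrow> (var \<Rightarrow> 'a oalg) \<Rightarrow> 'a fpoly \<Rightarrow> 'a oalg" where
  "peval \<mu> \<beta> \<gamma> \<phi> f = (\<Sum>m\<in>Poly_Mapping.keys f. oscale (Poly_Mapping.lookup f m) (meval \<mu> \<beta> \<gamma> \<phi> m))"

definition graded_eval :: "(var \<Rightarrow> 'a::field oalg) \<Rightarrow> bool" where
  "graded_eval \<phi> \<longleftrightarrow> (\<forall>x. \<phi> x \<in> ohom (vdeg x))"

end

theory Submission
  imports Defs
begin
abbreviation "lk \<equiv> Poly_Mapping.lookup"
abbreviation "ks \<equiv> Poly_Mapping.keys"
abbreviation "sng \<equiv> Poly_Mapping.single"

section \<open>Octonions\<close>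
lemma oconj_omul: "\<And>a b. oconj (omul \<mu> \<beta> \<gamma> a b) = omul \<mu> \<beta> \<gamma> (oconj b) (oconj a)"
  by (simp only: split_paired_all) (simp add: algebra_simps)
lemma omul_oscale_left: "\<And>a b. omul \<mu> \<beta> \<gamma> (oscale c a) b = oscale c (omul \<mu> \<beta> \<gamma> a b)"
  by (simp only: split_paired_all) (simp add: algebra_simps)
lemma omul_oscale_right: "\<And>a b. omul \<mu> \<beta> \<gamma> a (oscale c b) = oscale c (omul \<mu> \<beta> \<gamma> a b)"
  by (simp only: split_paired_all) (simp add: algebra_simps)
lemma oscale_mult: "\<And>a. oscale (c*d) a = oscale c (oscale d a)"
  by (simp only: split_paired_all) (simp add: algebra_simps)
lemma oscale_zero: "\<And>a. oscale 0 a = 0"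
  by (simp only: split_paired_all) (simp add: zero_prod_def)
lemma oscale_add: "\<And>a. oscale (c+d) a = oscale c a + oscale d a"
  by (simp only: split_paired_all) (simp add: algebra_simps)
lemma oconj_add: "\<And>a b. oconj (a + b) = oconj a + oconj b"
  by (simp only: split_paired_all) (simp add: algebra_simps)
lemma oconj_zero: "oconj 0 = 0"
  by (simp add: zero_prod_def)
lemma oconj_oscale: "\<And>a. oconj (oscale c a) = oscale c (oconj a)"
  by (simp only: split_paired_all) (simp add: algebra_simps)
lemma oconj_sum: "finite A \<Longrightarrow> oconj (\<Sum>i\<in>A. F i) = (\<Sum>i\<in>A. oconj (F i))"
  by (induction A rule: finite_induct) (auto simp: oconj_zero oconj_add)
lemma oconj_ohom: assumes "g \<noteq> 0" "z \<in> ohom g" shows "oconj z = oscale (-1) z"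
  using assms
  by (cases g) (auto simp: ohom_def qhom_def zero_prod_def split: if_splits)

lemma lookup_pscale[simp]: "lk (pscale c p) k = c * lk p k"
  by (simp add: pscale_def map.rep_eq when_def)
lemma lookup_pmul: "lk (pmul p q) k = (case k of MVar _ \<Rightarrow> 0 | MMul m n \<Rightarrow> lk p m * lk q n)"
proof (cases k)
  case (MVar x)
  then show ?thesis by (simp add: pmul_def lookup_sum lookup_single when_def)
next
  case (MMul m n)
  have "lk (pmul p q) k = (\<Sum>m'\<in>ks p. \<Sum>n'\<in>ks q. if m' = m \<and> n' = n then lk p m' * lk q n' else 0)"
    by (simp add: pmul_def lookup_sum lookup_single when_def MMul eq_commute)
  also have "\<dots> = (\<Sum>m'\<in>ks p. if m' = m then lk p m' * lk q n else 0)"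
    by (rule sum.cong) (auto simp: if_distrib in_keys_iff cong: if_cong)
  also have "\<dots> = lk p m * lk q n" by (auto simp: in_keys_iff)
  finally show ?thesis using MMul by simp
qed
lemma lookup_pmul_MVar[simp]: "lk (pmul p q) (MVar x) = 0" by (simp add: lookup_pmul)
lemma lookup_pmul_MMul[simp]: "lk (pmul p q) (MMul m n) = lk p m * lk q n" by (simp add: lookup_pmul)

lemma pmul_add_left: "pmul (p + q) r = pmul p r + pmul q r"
  by (rule poly_mapping_eqI, case_tac k) (auto simp: lookup_add algebra_simps)
lemma pmul_add_right: "pmul r (p + q) = pmul r p + pmul r q"
  by (rule poly_mapping_eqI, case_tac k) (auto simp: lookup_add algebra_simps)
lemma pmul_minus_left: "pmul (- p) r = - pmul p r"
  by (rule poly_mapping_eqI, case_tac k) (auto simp: algebra_simps)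
lemma pmul_minus_right: "pmul r (- p) = - pmul r p"
  by (rule poly_mapping_eqI, case_tac k) (auto simp: algebra_simps)
lemma pmul_diff_left: "pmul (p - q) r = pmul p r - pmul q r"
  by (rule poly_mapping_eqI, case_tac k) (auto simp: lookup_minus algebra_simps)
lemma pmul_diff_right: "pmul r (p - q) = pmul r p - pmul r q"
  by (rule poly_mapping_eqI, case_tac k) (auto simp: lookup_minus algebra_simps)
lemma pmul_zero_left[simp]: "pmul 0 r = 0"
  by (rule poly_mapping_eqI, case_tac k) auto
lemma pmul_zero_right[simp]: "pmul r 0 = 0"
  by (rule poly_mapping_eqI, case_tac k) auto
lemma pmul_pscale_left: "pmul (pscale c p) r = pscale c (pmul p r)"
  by (rule poly_mapping_eqI, case_tac k) (auto simp: algebra_simps)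
lemma pmul_pscale_right: "pmul r (pscale c p) = pscale c (pmul r p)"
  by (rule poly_mapping_eqI, case_tac k) (auto simp: algebra_simps)
lemma pscale_add: "pscale c (p + q) = pscale c p + pscale c q"
  by (rule poly_mapping_eqI) (auto simp: lookup_add algebra_simps)
lemma pscale_add2: "pscale (c + d) p = pscale c p + pscale d p"
  by (rule poly_mapping_eqI) (auto simp: lookup_add algebra_simps)
lemma pscale_zero[simp]: "pscale 0 p = 0"
  by (rule poly_mapping_eqI) auto
lemma pscale_zero2[simp]: "pscale c 0 = 0"
  by (rule poly_mapping_eqI) auto
lemma pscale_one[simp]: "pscale 1 p = p"
  by (rule poly_mapping_eqI) auto
lemma pscale_m1: "pscale (-1) p = - p"
  by (rule poly_mapping_eqI) auto
lemma pscale_single: "pscale c (sng m a) = sng m (c * a)"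
  by (rule poly_mapping_eqI) (auto simp: lookup_single when_def)
lemma pmul_single: "pmul (sng m a) (sng n b) = sng (MMul m n) (a * b)"
  by (rule poly_mapping_eqI, case_tac k) (auto simp: lookup_single when_def)
lemma pmul_sum_left: "finite A \<Longrightarrow> pmul (\<Sum>i\<in>A. F i) r = (\<Sum>i\<in>A. pmul (F i) r)"
  by (induction A rule: finite_induct) (auto simp: pmul_add_left)
lemma pmul_sum_right: "finite A \<Longrightarrow> pmul r (\<Sum>i\<in>A. F i) = (\<Sum>i\<in>A. pmul r (F i))"
  by (induction A rule: finite_induct) (auto simp: pmul_add_right)

lemma poly_expand: "(f::'a::field fpoly) = (\<Sum>m\<in>ks f. pscale (lk f m) (sng m 1))"
proof (rule poly_mapping_eqI)
  fix k
  have "lk (\<Sum>m\<in>ks f. pscale (lk f m) (sng m 1)) k = (\<Sum>m\<in>ks f. if m = k then lk f m else 0)"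
    by (simp add: lookup_sum lookup_single when_def if_distrib cong: if_cong)
  also have "\<dots> = lk f k" by (auto simp: in_keys_iff)
  finally show "lk f k = lk (\<Sum>m\<in>ks f. pscale (lk f m) (sng m 1)) k" by simp
qed

lemma lin_superset:
  assumes "finite K" "ks p \<subseteq> K" "\<And>m. S m 0 = 0"
  shows "(\<Sum>m\<in>ks p. S m (lk p m)) = (\<Sum>m\<in>K. S m (lk p m))"
  by (rule sum.mono_neutral_left) (use assms in \<open>auto simp: in_keys_iff\<close>)
lemma lin_add:
  fixes S :: "'k \<Rightarrow> 'c::comm_monoid_add \<Rightarrow> 'b::comm_monoid_add"
  assumes "\<And>m. S m 0 = 0" "\<And>m a b. S m (a+b) = S m a + S m b"
  shows "(\<Sum>m\<in>ks (p+q). S m (lk (p+q) m)) = (\<Sum>m\<in>ks p. S m (lk p m)) + (\<Sum>m\<in>ks q. S m (lk q m))"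
proof -
  let ?K = "ks p \<union> ks q"
  have "(\<Sum>m\<in>ks (p+q). S m (lk (p+q) m)) = (\<Sum>m\<in>?K. S m (lk (p+q) m))"
    by (rule lin_superset) (auto simp: keys_add assms)
  also have "\<dots> = (\<Sum>m\<in>?K. S m (lk p m)) + (\<Sum>m\<in>?K. S m (lk q m))"
    by (simp add: lookup_add assms sum.distrib)
  also have "\<dots> = (\<Sum>m\<in>ks p. S m (lk p m)) + (\<Sum>m\<in>ks q. S m (lk q m))"
    by (subst (1 2) lin_superset[of ?K]) (auto simp: assms)
  finally show ?thesis .
qed
lemma lin_single:
  assumes "\<And>m. S m 0 = 0"
  shows "(\<Sum>k\<in>ks (sng m c). S k (lk (sng m c) k)) = S m c"
  using assms by (cases "c = 0") auto

section \<open>Reversal and star\<close>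
fun mrev :: "fmon \<Rightarrow> fmon" where
  "mrev (MVar x) = MVar x"
| "mrev (MMul u v) = MMul (mrev v) (mrev u)"
fun nv :: "fmon \<Rightarrow> nat" where
  "nv (MVar x) = 1"
| "nv (MMul u v) = nv u + nv v"
lemma mrev_mrev[simp]: "mrev (mrev m) = m" by (induction m) auto
lemma nv_mrev[simp]: "nv (mrev m) = nv m" by (induction m) auto
lemma mdeg_mrev[simp]: "mdeg (mrev m) = mdeg m" by (induction m) (auto simp: add.commute)
lemma mrev_eq_iff: "mrev m = k \<longleftrightarrow> m = mrev k" by auto

definition sgn1 :: "fmon \<Rightarrow> 'a::field" where "sgn1 m = (-1) ^ nv m"
lemma sgn1_MMul: "sgn1 (MMul u v) = sgn1 u * sgn1 v" by (simp add: sgn1_def power_add)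
lemma sgn1_sq: "(sgn1 m :: 'a::field) * sgn1 m = 1"
  by (simp add: sgn1_def flip: power_add)
lemma sgn1_mrev[simp]: "sgn1 (mrev m) = sgn1 m" by (simp add: sgn1_def)

lemma mstar_eq: "(mstar m :: 'a::field fpoly) = sng (mrev m) (sgn1 m)"
proof (induction m)
  case (MVar x)
  then show ?case by (simp add: pvar_def sgn1_def single_uminus)
next
  case (MMul u v)
  then show ?case by (simp add: pmul_single sgn1_MMul mult.commute)
qed

lemma lookup_star: "lk (star f) k = (sgn1 k :: 'a::field) * lk f (mrev k)"
proof -
  have "lk (star f) k = (\<Sum>m\<in>ks f. if m = mrev k then lk f m * sgn1 m else 0)"
    unfolding star_def mstar_eq
    by (simp add: lookup_sum lookup_single when_def mrev_eq_iff if_distrib cong: if_cong)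
  also have "\<dots> = sgn1 k * lk f (mrev k)"
    by (auto simp: in_keys_iff sgn1_def)
  finally show ?thesis .
qed

lemma star_add: "star (f + h) = star f + star h"
  by (rule poly_mapping_eqI) (simp add: lookup_star lookup_add algebra_simps)
lemma star_minus: "star (- f) = - star f"
  by (rule poly_mapping_eqI) (simp add: lookup_star)
lemma star_diff: "star (f - h) = star f - star h"
  by (rule poly_mapping_eqI) (simp add: lookup_star lookup_minus algebra_simps)
lemma star_pscale: "star (pscale c f) = pscale c (star f)"
  by (rule poly_mapping_eqI) (simp add: lookup_star algebra_simps)
lemma star_pmul: "star (pmul f h) = pmul (star h) (star f)"
  by (rule poly_mapping_eqI, case_tac k) (auto simp: lookup_star sgn1_MMul algebra_simps)
lemma star_star: "star (star f) = f"
  by (rule poly_mapping_eqI) (simp add: lookup_star mult.assoc[symmetric] sgn1_sq)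
lemma star_zero: "star 0 = 0"
  by (rule poly_mapping_eqI) (simp add: lookup_star)
lemma star_pvar: "star (pvar x) = - pvar x"
  by (simp add: star_def pvar_def)

lemma grp_cases: "(g::grp) = (0,0) \<or> g = (0,1) \<or> g = (1,0) \<or> g = (1,1)"
proof -
  obtain a b where g: "g = (a, b)" by (cases g)
  show ?thesis unfolding g by (cases a rule: bit.exhaust; cases b rule: bit.exhaust) auto
qed
lemma bit_add_self[simp]: "(a::bit) + a = 0"
  by (cases a rule: bit.exhaust) auto
lemma grp_add_self[simp]: "(g::grp) + g = 0"
  by (cases g) (simp add: zero_prod_def)
lemma grp_sum0: assumes "(a::grp) + b = 0" shows "a = b"
proof -
  have "a = a + (b + b)" by simp
  also have "\<dots> = (a + b) + b" by (simp add: add.assoc)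
  also have "\<dots> = b" using assms by simp
  finally show ?thesis .
qed
lemma "(1::bit) + 1 = 0" by simp
lemma "((1::bit),(0::bit)) + (0,1) = (1,1)" by simp
lemma grp_four: assumes "d1 \<noteq> 0" "d2 \<noteq> 0" "d1 \<noteq> d2" shows "(x::grp) \<in> {0, d1, d2, d1 + d2}"
  using grp_cases[of x] grp_cases[of d1] grp_cases[of d2] assms
  by (elim disjE) (simp_all add: zero_prod_def)
lemma sgen_UNIV: assumes "d1 \<noteq> 0" "d2 \<noteq> 0" "d1 \<noteq> d2" shows "sgen {d1, d2} = UNIV"
proof -
  have a: "d1 \<in> sgen {d1,d2}" "d2 \<in> sgen {d1,d2}" "0 \<in> sgen {d1,d2}"
    by (auto intro: sgen.intros)
  then have b: "d1 + d2 \<in> sgen {d1,d2}" by (auto intro: sgen.intros)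
  show ?thesis
  proof (rule set_eqI, rule iffI)
    fix x :: grp assume "x \<in> UNIV"
    then show "x \<in> sgen {d1,d2}" using grp_four[OF assms, of x] a b by blast
  qed simp
qed
lemma sgen_sub: assumes "S \<subseteq> {0, d}" shows "sgen S \<subseteq> {0, d}"
proof
  fix x assume "x \<in> sgen S" then show "x \<in> {0,d}"
  proof induction
    case sgen_zero then show ?case by simp
  next
    case (sgen_base a) then show ?case using assms by blast
  next
    case (sgen_add a b) then show ?case by auto
  qed
qed
lemma sgen_card: assumes "a \<in> {0,d}" "b \<in> {0,d}" "c \<in> {0,d}" shows "card (sgen {a,b,c}) \<le> 2"
proof -
  have "sgen {a,b,c} \<subseteq> {0,d}" by (rule sgen_sub) (use assms in auto)
  then have "card (sgen {a,b,c}) \<le> card {0,d}" by (rule card_mono[rotated]) simp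
  also have "\<dots> \<le> 2" by (cases "d = 0") auto
  finally show ?thesis .
qed

lemma lookup_hcomp: "lk (hcomp h f) k = (if mdeg k = h then lk f k else 0)"
proof -
  have "lk (hcomp h f) k = (\<Sum>m\<in>ks f. if m = k then (if mdeg k = h then lk f m else 0) else 0)"
    unfolding hcomp_def
    by (rule trans[OF lookup_sum sum.cong]) (auto simp: lookup_single when_def)
  also have "\<dots> = (if mdeg k = h then lk f k else 0)" by (auto simp: in_keys_iff)
  finally show ?thesis .
qed
lemma homogeneous_iff: "homogeneous h f \<longleftrightarrow> (\<forall>k\<in>ks f. mdeg k = h)"
  unfolding homogeneous_def poly_mapping_eq_iff fun_eq_iff lookup_hcomp
  by (auto simp: in_keys_iff)
lemma homog_single: "homogeneous (mdeg m) (sng m c)"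
  by (simp add: homogeneous_iff)
lemma homog_pvar: "homogeneous (vdeg x) (pvar x)"
  by (simp add: homogeneous_iff pvar_def)
lemma homog_mstar: "homogeneous (mdeg m) (mstar m)"
  by (simp add: homogeneous_iff mstar_eq)

section \<open>The subalgebra U\<close>
lemma Usub_iff: "p \<in> Usub \<longleftrightarrow> (\<forall>A. is_subalgebra A \<and> {pvar x | x. vdeg x \<noteq> 0} \<subseteq> A \<longrightarrow> p \<in> A)"
  unfolding Usub_def by blast
lemma Usub_subalg: "is_subalgebra Usub"
proof -
  have "0 \<in> Usub" unfolding Usub_iff is_subalgebra_def by blast
  moreover have "p + q \<in> Usub" if "p \<in> Usub" "q \<in> Usub" for p q
    using that unfolding Usub_iff is_subalgebra_def by blast
  moreover have "pscale c p \<in> Usub" if "p \<in> Usub" for c p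
    using that unfolding Usub_iff is_subalgebra_def by blast
  moreover have "pmul p q \<in> Usub" if "p \<in> Usub" "q \<in> Usub" for p q
    using that unfolding Usub_iff is_subalgebra_def by blast
  ultimately show ?thesis unfolding is_subalgebra_def by blast
qed
lemma Usub_pvar: "vdeg x \<noteq> 0 \<Longrightarrow> pvar x \<in> Usub"
  unfolding Usub_def by blast
lemma Usub_min: "is_subalgebra A \<Longrightarrow> (\<And>x. vdeg x \<noteq> 0 \<Longrightarrow> pvar x \<in> A) \<Longrightarrow> Usub \<subseteq> A"
  unfolding Usub_def by auto
fun goodm :: "fmon \<Rightarrow> bool" where
  "goodm (MVar x) = (vdeg x \<noteq> 0)"
| "goodm (MMul u v) = (goodm u \<and> goodm v)"
lemma Usub_good: assumes "(f::'a::field fpoly) \<in> Usub" "m \<in> ks f" shows "goodm m"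
proof -
  define A where "A = {f::'a fpoly. \<forall>m\<in>ks f. goodm m}"
  have h1: "p + q \<in> A" if "p \<in> A" "q \<in> A" for p q
  proof -
    have "ks (p + q) \<subseteq> ks p \<union> ks q" by (rule keys_add)
    then show ?thesis using that unfolding A_def by blast
  qed
  have h2: "pscale c p \<in> A" if "p \<in> A" for c p
  proof -
    have "ks (pscale c p) \<subseteq> ks p" by (auto simp: in_keys_iff)
    then show ?thesis using that unfolding A_def by blast
  qed
  have h3: "pmul p q \<in> A" if p: "p \<in> A" and q: "q \<in> A" for p q
    unfolding A_def
  proof (rule CollectI, rule ballI)
    fix k assume k: "k \<in> ks (pmul p q)"
    show "goodm k"
    proof (cases k)
      case (MVar x) then show ?thesis using k by (simp add: in_keys_iff)
    next
      case (MMul a b)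
      then have "a \<in> ks p" "b \<in> ks q" using k by (auto simp: in_keys_iff)
      then show ?thesis using p q MMul unfolding A_def by simp
    qed
  qed
  have h0: "0 \<in> A" unfolding A_def by simp
  have "is_subalgebra A"
    unfolding is_subalgebra_def using h0 h1 h2 h3 by blast
  moreover have "vdeg x \<noteq> 0 \<Longrightarrow> pvar x \<in> A" for x by (simp add: pvar_def A_def)
  ultimately have "Usub \<subseteq> A" by (rule Usub_min)
  then show ?thesis using assms unfolding A_def by blast
qed
lemma U_zero: "0 \<in> Usub" using Usub_subalg unfolding is_subalgebra_def by blast
lemma U_add: "p \<in> Usub \<Longrightarrow> q \<in> Usub \<Longrightarrow> p + q \<in> Usub" using Usub_subalg unfolding is_subalgebra_def by blast
lemma U_scale: "p \<in> Usub \<Longrightarrow> pscale c p \<in> Usub" using Usub_subalg unfolding is_subalgebra_def by blast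
lemma U_mul: "p \<in> Usub \<Longrightarrow> q \<in> Usub \<Longrightarrow> pmul p q \<in> Usub" using Usub_subalg unfolding is_subalgebra_def by blast
lemma Usub_star: assumes "(f::'a::field fpoly) \<in> Usub" shows "star f \<in> Usub"
proof -
  define A where "A = {f::'a fpoly. f \<in> Usub \<and> star f \<in> Usub}"
  have h0: "0 \<in> A" unfolding A_def by (simp add: star_zero U_zero)
  have h1: "p + q \<in> A" if "p \<in> A" "q \<in> A" for p q
    using that unfolding A_def by (simp add: star_add U_add)
  have h2: "pscale c p \<in> A" if "p \<in> A" for c p
    using that unfolding A_def by (simp add: star_pscale U_scale)
  have h3: "pmul p q \<in> A" if "p \<in> A" "q \<in> A" for p q
    using that unfolding A_def by (simp add: star_pmul U_mul)
  have "is_subalgebra A"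
    unfolding is_subalgebra_def using h0 h1 h2 h3 by blast
  moreover have "pvar x \<in> A" if "vdeg x \<noteq> 0" for x
  proof -
    have "star (pvar x :: 'a fpoly) = pscale (-1) (pvar x)" by (simp add: star_pvar pscale_m1)
    then show ?thesis unfolding A_def using Usub_pvar[OF that] U_scale[OF Usub_pvar[OF that], of "-1"] by simp
  qed
  ultimately have "Usub \<subseteq> A" by (rule Usub_min)
  then show ?thesis using assms unfolding A_def by blast
qed

section \<open>The ideal I\<close>
lemma Iid_iff: "p \<in> Iid \<longleftrightarrow> (\<forall>J. graded_T_ideal J \<and> gens \<subseteq> J \<longrightarrow> p \<in> J)"
  unfolding Iid_def TI_gen_def by blast
lemma I_lift:
  assumes "\<And>J. is_ideal J \<Longrightarrow> (\<forall>q\<in>Q. q \<in> J) \<Longrightarrow> r \<in> J"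
    and "\<forall>q\<in>Q. q \<in> Iid"
  shows "r \<in> Iid"
  unfolding Iid_iff
proof (intro allI impI)
  fix J :: "'a fpoly set" assume J: "graded_T_ideal J \<and> gens \<subseteq> J"
  have "\<forall>q\<in>Q. q \<in> J" using assms(2) J unfolding Iid_iff by blast
  moreover have "is_ideal J" using J unfolding graded_T_ideal_def by blast
  ultimately show "r \<in> J" using assms(1) by blast
qed
lemma gens_I: assumes "graded_subst \<sigma>" "g \<in> gens" shows "psubst \<sigma> g \<in> Iid"
  unfolding Iid_iff
proof (intro allI impI)
  fix J :: "'a fpoly set" assume J: "graded_T_ideal J \<and> gens \<subseteq> J"
  then have "g \<in> J" using assms(2) by blast
  then show "psubst \<sigma> g \<in> J" using J assms(1) unfolding graded_T_ideal_def by blast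
qed
lemma ideal_add: "is_ideal J \<Longrightarrow> p \<in> J \<Longrightarrow> q \<in> J \<Longrightarrow> p + q \<in> J"
  unfolding is_ideal_def by blast
lemma ideal_zero: "is_ideal J \<Longrightarrow> 0 \<in> J"
  unfolding is_ideal_def by blast
lemma ideal_scale: "is_ideal J \<Longrightarrow> p \<in> J \<Longrightarrow> pscale c p \<in> J"
  unfolding is_ideal_def by blast
lemma ideal_mull: "is_ideal J \<Longrightarrow> p \<in> J \<Longrightarrow> pmul p q \<in> J"
  unfolding is_ideal_def by blast
lemma ideal_mulr: "is_ideal J \<Longrightarrow> p \<in> J \<Longrightarrow> pmul q p \<in> J"
  unfolding is_ideal_def by blast
lemma I_add: assumes "p \<in> Iid" "q \<in> Iid" shows "p + q \<in> Iid"
  by (rule I_lift[of "{p,q}"]) (use assms ideal_add in blast)+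
lemma I_zero: "0 \<in> Iid"
  by (rule I_lift[of "{}"]) (use ideal_zero in blast)+
lemma I_scale: assumes "p \<in> Iid" shows "pscale c p \<in> Iid"
  by (rule I_lift[of "{p}"]) (use assms ideal_scale in blast)+
lemma I_mull: assumes "p \<in> Iid" shows "pmul p q \<in> Iid"
  by (rule I_lift[of "{p}"]) (use assms ideal_mull in blast)+
lemma I_mulr: assumes "p \<in> Iid" shows "pmul q p \<in> Iid"
  by (rule I_lift[of "{p}"]) (use assms ideal_mulr in blast)+
lemma I_neg: "p \<in> Iid \<Longrightarrow> - p \<in> Iid"
  using I_scale[of p "-1"] by (simp add: pscale_m1)
lemma I_sum: "finite A \<Longrightarrow> (\<And>i. i \<in> A \<Longrightarrow> F i \<in> Iid) \<Longrightarrow> (\<Sum>i\<in>A. F i) \<in> Iid"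
  by (induction A rule: finite_induct) (auto intro: I_add I_zero)

definition eqv :: "'a::field fpoly \<Rightarrow> 'a fpoly \<Rightarrow> bool" where "eqv p q \<longleftrightarrow> p - q \<in> Iid"
lemma eqv_refl: "eqv p p" by (simp add: eqv_def I_zero)
lemma eqv_sym: "eqv p q \<Longrightarrow> eqv q p"
proof -
  assume "eqv p q" then have "- (p - q) \<in> Iid" unfolding eqv_def by (rule I_neg)
  then show ?thesis unfolding eqv_def by simp
qed
lemma eqv_trans: "eqv p q \<Longrightarrow> eqv q r \<Longrightarrow> eqv p r"
proof -
  assume "eqv p q" "eqv q r" then have "(p - q) + (q - r) \<in> Iid" unfolding eqv_def by (rule I_add)
  then show ?thesis unfolding eqv_def by simp
qed
lemma eqv_add: "eqv p p' \<Longrightarrow> eqv q q' \<Longrightarrow> eqv (p + q) (p' + q')"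
proof -
  assume "eqv p p'" "eqv q q'" then have "(p - p') + (q - q') \<in> Iid" unfolding eqv_def by (rule I_add)
  moreover have "(p - p') + (q - q') = (p + q) - (p' + q')" by (simp add: algebra_simps)
  ultimately show ?thesis unfolding eqv_def by simp
qed
lemma eqv_neg: "eqv p p' \<Longrightarrow> eqv (- p) (- p')"
proof -
  assume "eqv p p'" then have "- (p - p') \<in> Iid" unfolding eqv_def by (rule I_neg)
  moreover have "- (p - p') = - p - - p'" by simp
  ultimately show ?thesis unfolding eqv_def by simp
qed
lemma eqv_mul: "eqv p p' \<Longrightarrow> eqv q q' \<Longrightarrow> eqv (pmul p q) (pmul p' q')"
proof -
  assume a: "eqv p p'" "eqv q q'"
  have "pmul p q - pmul p' q' = pmul (p - p') q + pmul p' (q - q')"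
    by (simp add: pmul_diff_left pmul_diff_right)
  moreover have "pmul (p - p') q + pmul p' (q - q') \<in> Iid"
    using a unfolding eqv_def by (intro I_add I_mull I_mulr)
  ultimately show ?thesis unfolding eqv_def by simp
qed
lemma eqv_mul_l: "eqv p p' \<Longrightarrow> eqv (pmul p q) (pmul p' q)" by (rule eqv_mul[OF _ eqv_refl])
lemma eqv_mul_r: "eqv q q' \<Longrightarrow> eqv (pmul p q) (pmul p q')" by (rule eqv_mul[OF eqv_refl])

lemma psubst_add: "psubst \<sigma> (p + q) = psubst \<sigma> p + psubst \<sigma> q"
  unfolding psubst_def by (rule lin_add) (simp_all add: pscale_add2)
lemma psubst_single: "psubst \<sigma> (sng m c) = pscale c (msubst \<sigma> m)"
  unfolding psubst_def by (rule lin_single) simp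
lemma psubst_diff: "psubst \<sigma> (p - q) = psubst \<sigma> p - psubst \<sigma> q"
  by (metis add_diff_cancel diff_add_cancel psubst_add)
lemma graded_pvar: "graded_subst pvar"
  by (simp add: graded_subst_def homog_pvar)
lemma graded_upd: "graded_subst \<sigma> \<Longrightarrow> homogeneous (vdeg x) P \<Longrightarrow> graded_subst (\<sigma>(x := P))"
  by (simp add: graded_subst_def)

lemma pvar_mul: "pmul (pvar a) (pvar b) = sng (MMul (MVar a) (MVar b)) 1"
  by (simp add: pvar_def pmul_single)

lemma jordanI:
  fixes P Q :: "'a::field fpoly"
  assumes "homogeneous d1 P" "homogeneous d2 Q" "d1 \<noteq> 0" "d2 \<noteq> 0" "d1 \<noteq> d2"
  shows "pmul P Q + pmul Q P \<in> Iid"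
proof -
  define x :: var where "x = (0, d1)"
  define y :: var where "y = (1, d2)"
  have vx: "vdeg x = d1" "vdeg y = d2" by (simp_all add: x_def y_def vdeg_def)
  have xy: "x \<noteq> y" by (simp add: x_def y_def)
  let ?\<sigma> = "pvar(x := P, y := Q)"
  have gs: "graded_subst ?\<sigma>" using assms vx by (intro graded_upd graded_pvar) auto
  have "jordan (pvar x) (pvar y) \<in> (gens :: 'a fpoly set)"
    unfolding gens_def apply (rule UnI1, rule UnI1, rule UnI1, rule UnI1, rule UnI1, rule UnI1, rule UnI2) using sgen_UNIV[OF assms(3-5)] vx by blast
  from gens_I[OF gs this]
  show ?thesis using xy
    by (simp add: jordan_def pvar_mul psubst_add psubst_single)
qed

lemma gen1I:
  fixes P Q R :: "'a::field fpoly"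
  assumes "homogeneous a P" "homogeneous a Q" "homogeneous d R" "a \<noteq> 0" "d \<noteq> 0"
  shows "pmul (pmul P Q) R - pmul R (pmul Q P) \<in> Iid"
proof -
  define x :: var where "x = (0, a)"
  define y :: var where "y = (1, a)"
  define z :: var where "z = (2, d)"
  have vx: "vdeg x = a" "vdeg y = a" "vdeg z = d" by (simp_all add: x_def y_def z_def vdeg_def)
  have xy: "x \<noteq> y" "x \<noteq> z" "y \<noteq> z" by (simp_all add: x_def y_def z_def)
  let ?\<sigma> = "pvar(x := P, y := Q, z := R)"
  have gs: "graded_subst ?\<sigma>" using assms vx by (intro graded_upd graded_pvar) auto
  have "pmul (pmul (pvar x) (pvar y)) (pvar z) - pmul (pvar z) (pmul (pvar y) (pvar x)) \<in> (gens :: 'a fpoly set)"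
    unfolding gens_def apply (rule UnI1, rule UnI1, rule UnI1, rule UnI1, rule UnI1, rule UnI1, rule UnI1, rule UnI1, rule UnI1)
    apply (simp only: mem_Collect_eq)
    apply (rule exI[of _ x], rule exI[of _ y], rule exI[of _ z])
    using assms vx by simp
  from gens_I[OF gs this]
  show ?thesis using xy
    by (simp add: pvar_mul psubst_diff psubst_single pmul_single pvar_def)
qed

lemma assocI:
  fixes P Q R :: "'a::field fpoly"
  assumes "homogeneous a P" "homogeneous b Q" "homogeneous c R" "a \<in> {0,d}" "b \<in> {0,d}" "c \<in> {0,d}"
  shows "pmul (pmul P Q) R - pmul P (pmul Q R) \<in> Iid"
proof -
  define x :: var where "x = (0, a)"
  define y :: var where "y = (1, b)"
  define z :: var where "z = (2, c)"
  have vx: "vdeg x = a" "vdeg y = b" "vdeg z = c" by (simp_all add: x_def y_def z_def vdeg_def)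
  have xy: "x \<noteq> y" "x \<noteq> z" "y \<noteq> z" by (simp_all add: x_def y_def z_def)
  let ?\<sigma> = "pvar(x := P, y := Q, z := R)"
  have gs: "graded_subst ?\<sigma>" using assms vx by (intro graded_upd graded_pvar) auto
  have hc: "card (sgen {vdeg x, vdeg y, vdeg z}) \<le> 2" using sgen_card[of a d b c] assms vx by simp
  have "assoc (pvar x) (pvar y) (pvar z) \<in> (gens :: 'a fpoly set)"
    unfolding gens_def apply (rule UnI1, rule UnI2) using hc by blast
  from gens_I[OF gs this]
  show ?thesis using xy
    by (simp add: assoc_def psubst_diff psubst_single pmul_single pvar_def)
qed

lemma commI:
  fixes P Q :: "'a::field fpoly"
  assumes "homogeneous 0 P" "homogeneous 0 Q"
  shows "pmul P Q - pmul Q P \<in> Iid"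
proof -
  define x :: var where "x = (0, 0)"
  define y :: var where "y = (1, 0)"
  have vx: "vdeg x = 0" "vdeg y = 0" by (simp_all add: x_def y_def vdeg_def)
  have xy: "x \<noteq> y" by (simp add: x_def y_def)
  let ?\<sigma> = "pvar(x := P, y := Q)"
  have gs: "graded_subst ?\<sigma>" using assms vx by (intro graded_upd graded_pvar) auto
  have "comm (pvar x) (pvar y) \<in> (gens :: 'a fpoly set)"
    unfolding gens_def apply (rule UnI2) using vx by blast
  from gens_I[OF gs this]
  show ?thesis using xy
    by (simp add: comm_def psubst_diff psubst_single pvar_mul)
qed


declare eqv_trans[trans]
lemma eqvI: "p - q \<in> Iid \<Longrightarrow> eqv p q" by (simp add: eqv_def)

lemma main_mon:
  fixes m :: fmon
  assumes "goodm m"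
  shows "(mdeg m \<noteq> 0 \<longrightarrow> eqv (mstar m :: 'a::field fpoly) (- sng m 1)) \<and>
        (mdeg m = 0 \<longrightarrow> (\<forall>(R::'a fpoly) d. homogeneous d R \<and> d \<noteq> 0 \<longrightarrow>
            eqv (pmul (sng m 1) R) (pmul R (mstar m)) \<and> eqv (pmul (mstar m) R) (pmul R (sng m 1))))"
  using assms
proof (induction m)
  case (MVar x)
  then show ?case by (simp add: pvar_def eqv_refl single_uminus)
next
  case (MMul u v)
  have gu: "goodm u" and gv: "goodm v" using MMul.prems by auto
  note IHu = MMul.IH(1)[OF gu] and IHv = MMul.IH(2)[OF gv]
  define su :: "'a fpoly" where "su = sng u 1"
  define sv :: "'a fpoly" where "sv = sng v 1"
  define tu :: "'a fpoly" where "tu = mstar u"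
  define tv :: "'a fpoly" where "tv = mstar v"
  have sm: "sng (MMul u v) 1 = pmul su sv" by (simp add: pmul_single su_def sv_def)
  have tm: "(mstar (MMul u v) :: 'a fpoly) = pmul tv tu" by (simp add: tu_def tv_def)
  have hsu: "homogeneous (mdeg u) su" and hsv: "homogeneous (mdeg v) sv"
    by (simp_all add: su_def sv_def homog_single)
  have htu: "homogeneous (mdeg u) tu" and htv: "homogeneous (mdeg v) tv"
    by (simp_all add: tu_def tv_def homog_mstar)
  note IHu' = IHu[folded su_def tu_def] and IHv' = IHv[folded sv_def tv_def]
  show ?case
  proof (cases "mdeg u + mdeg v = 0")
    case False
    then have nz: "mdeg (MMul u v) \<noteq> 0" by simp
    have "eqv (mstar (MMul u v)) (- sng (MMul u v) (1::'a))"
    proof (cases "mdeg u = 0")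
      case True
      then have dv: "mdeg v \<noteq> 0" using False by simp
      have e1: "eqv (pmul su sv) (pmul sv tu)" using IHu' True hsv dv by blast
      have "eqv (pmul tv tu) (pmul (- sv) tu)" using IHv' dv by (intro eqv_mul_l) auto
      also have "pmul (- sv) tu = - pmul sv tu" by (simp add: pmul_minus_left)
      also have "eqv \<dots> (- pmul su sv)" by (rule eqv_neg[OF eqv_sym[OF e1]])
      finally show ?thesis using sm tm by simp
    next
      case du: False
      show ?thesis
      proof (cases "mdeg v = 0")
        case True
        have e1: "eqv (pmul tv su) (pmul su sv)" using IHv' True hsu du by blast
        have "eqv (pmul tv tu) (pmul tv (- su))" using IHu' du by (intro eqv_mul_r) auto
        also have "pmul tv (- su) = - pmul tv su" by (simp add: pmul_minus_right)
        also have "eqv \<dots> (- pmul su sv)" by (rule eqv_neg[OF e1])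
        finally show ?thesis using sm tm by simp
      next
        case dv: False
        have neq: "mdeg u \<noteq> mdeg v" using False by auto
        have "eqv (pmul tv tu) (pmul (- sv) (- su))" using IHu' IHv' du dv by (intro eqv_mul) auto
        also have "pmul (- sv) (- su) = pmul sv su" by (simp add: pmul_minus_left pmul_minus_right)
        also have "eqv \<dots> (- pmul su sv)"
          using jordanI[OF hsu hsv du dv neq] by (intro eqvI) (simp add: add.commute)
        finally show ?thesis using sm tm by simp
      qed
    qed
    then show ?thesis using nz by simp
  next
    case True
    then have duv: "mdeg u = mdeg v" by (rule grp_sum0)
    have goal: "eqv (pmul (pmul su sv) R') (pmul R' (pmul tv tu)) \<and> eqv (pmul (pmul tv tu) R') (pmul R' (pmul su sv))"
      if hR: "homogeneous d R'" and d0: "d \<noteq> 0" for R' :: "'a fpoly" and d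
    proof (cases "mdeg u = 0")
      case False
      then have dv: "mdeg v \<noteq> 0" using duv by simp
      have hsv': "homogeneous (mdeg u) sv" using hsv duv by simp
      have ts: "eqv (pmul tv tu) (pmul sv su)"
      proof -
        have "eqv (pmul tv tu) (pmul (- sv) (- su))" using IHu' IHv' False dv by (intro eqv_mul) auto
        also have "pmul (- sv) (- su) = pmul sv su" by (simp add: pmul_minus_left pmul_minus_right)
        finally show ?thesis .
      qed
      have g1: "eqv (pmul (pmul su sv) R') (pmul R' (pmul tv tu))"
      proof -
        have "eqv (pmul (pmul su sv) R') (pmul R' (pmul sv su))"
          by (rule eqvI, rule gen1I[OF hsu hsv' hR False d0])
        also have "eqv \<dots> (pmul R' (pmul tv tu))" by (rule eqv_mul_r[OF eqv_sym[OF ts]])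
        finally show ?thesis .
      qed
      have g2: "eqv (pmul (pmul tv tu) R') (pmul R' (pmul su sv))"
      proof -
        have "eqv (pmul (pmul tv tu) R') (pmul (pmul sv su) R')" by (rule eqv_mul_l[OF ts])
        also have "eqv \<dots> (pmul R' (pmul su sv))"
          by (rule eqvI, rule gen1I[OF hsv' hsu hR False d0])
        finally show ?thesis .
      qed
      show ?thesis using g1 g2 by simp
    next
      case u0: True
      then have v0: "mdeg v = 0" using duv by simp
      have hsu0: "homogeneous 0 su" "homogeneous 0 tu" using hsu htu u0 by simp_all
      have hsv0: "homogeneous 0 sv" "homogeneous 0 tv" using hsv htv v0 by simp_all
      have IU: "eqv (pmul su R') (pmul R' tu)" "eqv (pmul tu R') (pmul R' su)"
        using IHu' u0 hR d0 by blast+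
      have IV: "eqv (pmul sv R') (pmul R' tv)" "eqv (pmul tv R') (pmul R' sv)"
        using IHv' v0 hR d0 by blast+
      have d: "(0::grp) \<in> {0, d}" "d \<in> {0,d}" by simp_all
      have g1: "eqv (pmul (pmul su sv) R') (pmul R' (pmul tv tu))"
      proof -
        have "eqv (pmul (pmul su sv) R') (pmul su (pmul sv R'))"
          by (rule eqvI, rule assocI[OF hsu0(1) hsv0(1) hR d(1) d(1) d(2)])
        also have "eqv \<dots> (pmul su (pmul R' tv))" by (rule eqv_mul_r[OF IV(1)])
        also have "eqv \<dots> (pmul (pmul su R') tv)"
          by (rule eqv_sym, rule eqvI, rule assocI[OF hsu0(1) hR hsv0(2) d(1) d(2) d(1)])
        also have "eqv \<dots> (pmul (pmul R' tu) tv)" by (rule eqv_mul_l[OF IU(1)])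
        also have "eqv \<dots> (pmul R' (pmul tu tv))"
          by (rule eqvI, rule assocI[OF hR hsu0(2) hsv0(2) d(2) d(1) d(1)])
        also have "eqv \<dots> (pmul R' (pmul tv tu))"
          by (rule eqv_mul_r, rule eqvI, rule commI[OF hsu0(2) hsv0(2)])
        finally show ?thesis .
      qed
      have g2: "eqv (pmul (pmul tv tu) R') (pmul R' (pmul su sv))"
      proof -
        have "eqv (pmul (pmul tv tu) R') (pmul tv (pmul tu R'))"
          by (rule eqvI, rule assocI[OF hsv0(2) hsu0(2) hR d(1) d(1) d(2)])
        also have "eqv \<dots> (pmul tv (pmul R' su))" by (rule eqv_mul_r[OF IU(2)])
        also have "eqv \<dots> (pmul (pmul tv R') su)"
          by (rule eqv_sym, rule eqvI, rule assocI[OF hsv0(2) hR hsu0(1) d(1) d(2) d(1)])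
        also have "eqv \<dots> (pmul (pmul R' sv) su)" by (rule eqv_mul_l[OF IV(2)])
        also have "eqv \<dots> (pmul R' (pmul sv su))"
          by (rule eqvI, rule assocI[OF hR hsv0(1) hsu0(1) d(2) d(1) d(1)])
        also have "eqv \<dots> (pmul R' (pmul su sv))"
          by (rule eqv_mul_r, rule eqvI, rule commI[OF hsv0(1) hsu0(1)])
        finally show ?thesis .
      qed
      show ?thesis using g1 g2 by simp
    qed
    show ?thesis unfolding sm tm using goal True by auto
  qed
qed


lemma sum_scale_I:
  assumes "\<And>m. m \<in> ks f \<Longrightarrow> X m \<in> Iid"
  shows "(\<Sum>m\<in>ks f. pscale (lk f m) (X m)) \<in> Iid"
  by (rule I_sum) (auto intro: I_scale assms)

lemma pscale_diff: "pscale c (p - q) = pscale c p - pscale c q"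
  by (rule poly_mapping_eqI) (simp add: lookup_minus algebra_simps)
lemma pscale_uminus: "pscale c (- p) = - pscale c p"
  by (rule poly_mapping_eqI) simp
lemma sum_scale_diff:
  "(\<Sum>m\<in>A. pscale (c m) (X m)) - (\<Sum>m\<in>A. pscale (c m) (Y m)) = (\<Sum>m\<in>A. pscale (c m) (X m - Y m))"
  by (simp add: pscale_diff sum_subtractf)

lemma keys_deg_ne:
  assumes "hcomp h f = 0" "m \<in> ks f" shows "mdeg m \<noteq> h"
proof
  assume "mdeg m = h"
  then have "lk (hcomp h f) m = lk f m" by (simp add: lookup_hcomp)
  then show False using assms by (simp add: in_keys_iff)
qed

lemma part2:
  assumes "(f::'a::field fpoly) \<in> Usub" "hcomp 0 f = 0"
  shows "star f - (- f) \<in> Iid"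
proof -
  have e: "- f = (\<Sum>m\<in>ks f. pscale (lk f m) (- sng m 1))"
  proof -
    have "- f = - (\<Sum>m\<in>ks f. pscale (lk f m) (sng m 1))" using poly_expand[of f] by simp
    also have "\<dots> = (\<Sum>m\<in>ks f. - pscale (lk f m) (sng m 1))" by (simp add: sum_negf)
    also have "\<dots> = (\<Sum>m\<in>ks f. pscale (lk f m) (- sng m 1))"
      by (simp add: pscale_uminus)
    finally show ?thesis .
  qed
  have "star f - (- f) = (\<Sum>m\<in>ks f. pscale (lk f m) (mstar m - (- sng m 1)))"
    unfolding e star_def by (rule sum_scale_diff)
  also have "\<dots> \<in> Iid"
  proof (rule sum_scale_I)
    fix m assume m: "m \<in> ks f"
    have g: "goodm m" using Usub_good[OF assms(1) m] .
    have "mdeg m \<noteq> 0" using keys_deg_ne[OF assms(2) m] .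
    then have "eqv (mstar m :: 'a fpoly) (- sng m 1)" using main_mon[OF g] by blast
    then show "(mstar m :: 'a fpoly) - (- sng m 1) \<in> Iid" by (simp add: eqv_def)
  qed
  finally show ?thesis .
qed

lemma homog_hcomp0:
  assumes "homogeneous h v" "h \<noteq> 0" shows "hcomp 0 v = 0"
proof (rule poly_mapping_eqI)
  fix k
  show "lk (hcomp 0 v) k = lk 0 k"
    using assms by (auto simp: lookup_hcomp homogeneous_iff in_keys_iff)
qed

lemma part3:
  assumes "(v::'a::field fpoly) \<in> Usub" "w \<in> Usub" "h \<noteq> 0" "homogeneous h v" "homogeneous h w"
  shows "star (pmul v w) - pmul w v \<in> Iid"
proof -
  have ev: "eqv (star v) (- v)" using part2[OF assms(1) homog_hcomp0[OF assms(4,3)]] by (simp add: eqv_def)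
  have ew: "eqv (star w) (- w)" using part2[OF assms(2) homog_hcomp0[OF assms(5,3)]] by (simp add: eqv_def)
  have "eqv (pmul (star w) (star v)) (pmul (- w) (- v))" by (rule eqv_mul[OF ew ev])
  then show ?thesis by (simp add: star_pmul eqv_def pmul_minus_left pmul_minus_right)
qed

lemma part4:
  assumes "(f::'a::field fpoly) \<in> Usub" "vdeg x \<noteq> 0" "hcomp (vdeg x) f = 0"
  shows "pmul f (pvar x) - pmul (pvar x) (star f) \<in> Iid"
proof -
  define X :: "'a fpoly" where "X = pvar x"
  have hX: "homogeneous (vdeg x) X" by (simp add: X_def homog_pvar)
  have e1: "pmul f X = (\<Sum>m\<in>ks f. pscale (lk f m) (pmul (sng m 1) X))"
  proof -
    have "pmul f X = pmul (\<Sum>m\<in>ks f. pscale (lk f m) (sng m 1)) X"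
      using arg_cong[OF poly_expand[of f], of "\<lambda>p. pmul p X"] .
    also have "\<dots> = (\<Sum>m\<in>ks f. pscale (lk f m) (pmul (sng m 1) X))"
      by (simp add: pmul_sum_left pmul_pscale_left)
    finally show ?thesis .
  qed
  have e2: "pmul X (star f) = (\<Sum>m\<in>ks f. pscale (lk f m) (pmul X (mstar m)))"
    unfolding star_def by (simp add: pmul_sum_right pmul_pscale_right)
  have "pmul f X - pmul X (star f) = (\<Sum>m\<in>ks f. pscale (lk f m) (pmul (sng m 1) X - pmul X (mstar m)))"
    unfolding e1 e2 by (rule sum_scale_diff)
  also have "\<dots> \<in> Iid"
  proof (rule sum_scale_I)
    fix m assume m: "m \<in> ks f"
    have g: "goodm m" using Usub_good[OF assms(1) m] .
    have ne: "mdeg m \<noteq> vdeg x" using keys_deg_ne[OF assms(3) m] .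
    have "eqv (pmul (sng m 1) X) (pmul X (mstar m))"
    proof (cases "mdeg m = 0")
      case True
      then show ?thesis using main_mon[OF g] hX assms(2) by blast
    next
      case False
      then have "eqv (mstar m :: 'a fpoly) (- sng m 1)" using main_mon[OF g] by blast
      then have a: "eqv (pmul X (mstar m)) (- pmul X (sng m 1))"
        using eqv_mul_r[of "mstar m" "- sng m 1" X] by (simp add: pmul_minus_right)
      have "pmul (sng m 1) X + pmul X (sng m 1) \<in> Iid"
        by (rule jordanI[OF homog_single hX False assms(2) ne])
      then have b: "eqv (pmul (sng m 1) X) (- pmul X (sng m 1))" by (simp add: eqv_def)
      show ?thesis by (rule eqv_trans[OF b eqv_sym[OF a]])
    qed
    then show "pmul (sng m 1) X - pmul X (mstar m) \<in> Iid" by (simp add: eqv_def)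
  qed
  finally show ?thesis by (simp add: X_def)
qed

lemma peval_add: "peval \<mu> \<beta> \<gamma> \<phi> (p + q) = peval \<mu> \<beta> \<gamma> \<phi> p + peval \<mu> \<beta> \<gamma> \<phi> q"
  unfolding peval_def by (rule lin_add) (simp_all add: oscale_zero oscale_add)
lemma peval_single: "peval \<mu> \<beta> \<gamma> \<phi> (sng m c) = oscale c (meval \<mu> \<beta> \<gamma> \<phi> m)"
  unfolding peval_def by (rule lin_single) (simp add: oscale_zero)
lemma peval_zero: "peval \<mu> \<beta> \<gamma> \<phi> 0 = 0"
  by (simp add: peval_def)
lemma peval_sum: "finite A \<Longrightarrow> peval \<mu> \<beta> \<gamma> \<phi> (\<Sum>i\<in>A. F i) = (\<Sum>i\<in>A. peval \<mu> \<beta> \<gamma> \<phi> (F i))"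
  by (induction A rule: finite_induct) (auto simp: peval_zero peval_add)

lemma meval_conj:
  assumes "goodm m" "graded_eval \<phi>"
  shows "oconj (meval \<mu> \<beta> \<gamma> \<phi> m) = oscale (sgn1 m) (meval \<mu> \<beta> \<gamma> \<phi> (mrev m))"
  using assms(1)
proof (induction m)
  case (MVar x)
  have "\<phi> x \<in> ohom (vdeg x)" using assms(2) unfolding graded_eval_def by blast
  then show ?case using MVar oconj_ohom[of "vdeg x" "\<phi> x"] by (simp add: sgn1_def)
next
  case (MMul u v)
  then show ?case
    by (simp add: oconj_omul omul_oscale_left omul_oscale_right sgn1_MMul oscale_mult[symmetric] mult.commute)
qed

lemma part5:
  assumes "(f::'a::field fpoly) \<in> Usub" "graded_eval \<phi>"
  shows "peval \<mu> \<beta> \<gamma> \<phi> (star f) = oconj (peval \<mu> \<beta> \<gamma> \<phi> f)"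
proof -
  have "star f = (\<Sum>m\<in>ks f. sng (mrev m) (lk f m * sgn1 m))"
    unfolding star_def by (simp add: mstar_eq pscale_single)
  then have "peval \<mu> \<beta> \<gamma> \<phi> (star f) = (\<Sum>m\<in>ks f. oscale (lk f m * sgn1 m) (meval \<mu> \<beta> \<gamma> \<phi> (mrev m)))"
    by (simp add: peval_sum peval_single)
  also have "\<dots> = (\<Sum>m\<in>ks f. oconj (oscale (lk f m) (meval \<mu> \<beta> \<gamma> \<phi> m)))"
  proof (rule sum.cong)
    fix m assume m: "m \<in> ks f"
    have g: "goodm m" using Usub_good[OF assms(1) m] .
    show "oscale (lk f m * sgn1 m) (meval \<mu> \<beta> \<gamma> \<phi> (mrev m)) = oconj (oscale (lk f m) (meval \<mu> \<beta> \<gamma> \<phi> m))"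
      by (simp add: oconj_oscale meval_conj[OF g assms(2)] oscale_mult)
  qed simp
  also have "\<dots> = oconj (peval \<mu> \<beta> \<gamma> \<phi> f)"
    by (simp add: peval_def oconj_sum)
  finally show ?thesis .
qed

lemma exists_nonfixed: "\<exists>f\<in>(Usub :: 'a::field fpoly set). star f \<noteq> f"
proof -
  define x :: var where "x = (0, (1, 0))"
  define y :: var where "y = (1, (1, 0))"
  have vx: "vdeg x \<noteq> 0" "vdeg y \<noteq> 0" by (simp_all add: x_def y_def vdeg_def zero_prod_def)
  define f :: "'a fpoly" where "f = pmul (pvar x) (pvar y)"
  have fU: "f \<in> Usub" unfolding f_def using Usub_pvar[OF vx(1)] Usub_pvar[OF vx(2)] by (rule U_mul)
  have "star f = sng (MMul (MVar y) (MVar x)) 1"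
  proof -
    have "star f = pmul (pvar y) (pvar x)"
      unfolding f_def star_pmul star_pvar pmul_minus_left pmul_minus_right minus_minus ..
    then show ?thesis by (simp add: pvar_mul)
  qed
  moreover have "f = sng (MMul (MVar x) (MVar y)) 1" by (simp add: f_def pvar_mul)
  moreover have "x \<noteq> y" by (simp add: x_def y_def)
  ultimately have "star f \<noteq> f"
  proof (intro notI)
    assume s1: "star f = sng (MMul (MVar y) (MVar x)) 1" and s2: "f = sng (MMul (MVar x) (MVar y)) 1"
      and xy: "x \<noteq> y" and eq: "star f = f"
    have "sng (MMul (MVar y) (MVar x)) (1::'a) = sng (MMul (MVar x) (MVar y)) 1" using eq s1 s2 by simp
    then have "lk (sng (MMul (MVar y) (MVar x)) (1::'a)) (MMul (MVar x) (MVar y)) = lk (sng (MMul (MVar x) (MVar y)) (1::'a)) (MMul (MVar x) (MVar y))" by simp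
    then show False using xy by (simp add: lookup_single when_def)
  qed
  then show ?thesis using fU by blast
qed

theorem mainTheorem7:
  fixes Fty :: "'a::field itself"
  defines "U \<equiv> (Usub :: 'a fpoly set)"
      and "I \<equiv> (Iid :: 'a fpoly set)"
  shows
    \<comment> \<open>(1) star is an involution of U (an anti-automorphism of order 2)\<close>
    "(\<forall>f\<in>U. star f \<in> U)
     \<and> (\<forall>f\<in>U. \<forall>h\<in>U. star (f + h) = star f + star h)
     \<and> (\<forall>c. \<forall>f\<in>U. star (pscale c f) = pscale c (star f))
     \<and> (\<forall>f\<in>U. \<forall>h\<in>U. star (pmul f h) = pmul (star h) (star f))
     \<and> (\<forall>f\<in>U. star (star f) = f)
     \<and> (\<exists>f\<in>U. star f \<noteq> f)
     \<comment> \<open>(2)\<close>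
     \<and> (\<forall>f\<in>U. hcomp 0 f = 0 \<longrightarrow> star f - (- f) \<in> I)
     \<comment> \<open>(3)\<close>
     \<and> (\<forall>v\<in>U. \<forall>w\<in>U. \<forall>h. h \<noteq> 0 \<and> homogeneous h v \<and> homogeneous h w
          \<longrightarrow> star (pmul v w) - pmul w v \<in> I)
     \<comment> \<open>(4)\<close>
     \<and> (\<forall>f\<in>U. \<forall>x. vdeg x \<noteq> 0 \<and> hcomp (vdeg x) f = 0
          \<longrightarrow> pmul f (pvar x) - pmul (pvar x) (star f) \<in> I)
     \<comment> \<open>(5)\<close>
     \<and> (\<forall>f\<in>U. \<forall>\<mu> \<beta> \<gamma> (\<phi> :: var \<Rightarrow> 'a oalg).
          4 * \<mu> + 1 \<noteq> 0 \<and> \<beta> \<noteq> 0 \<and> \<gamma> \<noteq> 0 \<and> graded_eval \<phi>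
          \<longrightarrow> peval \<mu> \<beta> \<gamma> \<phi> (star f) = oconj (peval \<mu> \<beta> \<gamma> \<phi> f))"
proof -
  have c1: "\<forall>f\<in>(Usub :: 'a fpoly set). star f \<in> Usub" using Usub_star by blast
  have c2: "\<forall>f\<in>(Usub :: 'a fpoly set). \<forall>h\<in>Usub. star (f + h) = star f + star h" by (simp add: star_add)
  have c3: "\<forall>c. \<forall>f\<in>(Usub :: 'a fpoly set). star (pscale c f) = pscale c (star f)" by (simp add: star_pscale)
  have c4: "\<forall>f\<in>(Usub :: 'a fpoly set). \<forall>h\<in>Usub. star (pmul f h) = pmul (star h) (star f)" by (simp add: star_pmul)
  have c5: "\<forall>f\<in>(Usub :: 'a fpoly set). star (star f) = f" by (simp add: star_star)
  have c6: "\<exists>f\<in>(Usub :: 'a fpoly set). star f \<noteq> f" by (rule exists_nonfixed)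
  have c7: "\<forall>f\<in>(Usub :: 'a fpoly set). hcomp 0 f = 0 \<longrightarrow> star f - (- f) \<in> Iid"
    using part2 by blast
  have c8: "\<forall>v\<in>(Usub :: 'a fpoly set). \<forall>w\<in>Usub. \<forall>h. h \<noteq> 0 \<and> homogeneous h v \<and> homogeneous h w
          \<longrightarrow> star (pmul v w) - pmul w v \<in> Iid"
    using part3 by blast
  have c9: "\<forall>f\<in>(Usub :: 'a fpoly set). \<forall>x. vdeg x \<noteq> 0 \<and> hcomp (vdeg x) f = 0
          \<longrightarrow> pmul f (pvar x) - pmul (pvar x) (star f) \<in> Iid"
    using part4 by blast
  have c10: "\<forall>f\<in>(Usub :: 'a fpoly set). \<forall>\<mu> \<beta> \<gamma> (\<phi> :: var \<Rightarrow> 'a oalg).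
          4 * \<mu> + 1 \<noteq> 0 \<and> \<beta> \<noteq> 0 \<and> \<gamma> \<noteq> 0 \<and> graded_eval \<phi>
          \<longrightarrow> peval \<mu> \<beta> \<gamma> \<phi> (star f) = oconj (peval \<mu> \<beta> \<gamma> \<phi> f)"
    using part5 by blast
  show ?thesis unfolding U_def I_def using c1 c2 c3 c4 c5 c6 c7 c8 c9 c10 by blast
qed

end
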